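(* Let $c_1,c_2>0$ be constants. For positive integers $n,m$, consider the distribution $\mu$ on $\Sigma^{[n]\times[m]}$ obtained by choosing a function $\ell\colon[m]\to[n]$ uniformly at random and setting $x_{i,j}=(0,\bot,\bot,\bot)$ if $i=\ell(j)$ and $x_{i,j}=(1,\bot,\bot,\bot)$ otherwise. Let $\mathcal A$ be a randomized decision tree (a probability distribution over deterministic decision trees querying cells of $[n]\times[m]$) such that for every deterministic tree in its support and every input $x$ in the support of $\mu$, the tree terminates on $x$ only after it has either found at least $c_1 m$ cells with value $0$ or queried at least $c_2 nm$ cells. Then the maximum over $x$ in the support of $\mu$ of the expected number of queries made by $\mathcal A$ on $x$ is $\Omega(nm)$, where the constant in $\Omega$ depends only on $c_1,c_2$.
   Context: $\Sigma$ is an alphabet whose symbols are quadruples $(\text{value},\text{pointer},\text{pointer},\text{pointer})$ with value in $\{0,1\}$ and pointers in a set containing the null pointer $\bot$; a cell has value $0$ if the first component of its symbol is $0$. A query asks for the symbol $x_c$ of one cell $c$. *)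

theory Defs
  imports "HOL-Probability.Probability"
begin

text \<open>Symbols: (value, pointer, pointer, pointer); the null pointer is None.\<close>
type_synonym 'p sym = "nat \<times> 'p option \<times> 'p option \<times> 'p option"
type_synonym cell = "nat \<times> nat"

datatype ('c, 's, 'o) dtree = Leaf 'o | Query 'c "'s \<Rightarrow> ('c, 's, 'o) dtree"

primrec qpath :: "('c, 's, 'o) dtree \<Rightarrow> ('c \<Rightarrow> 's) \<Rightarrow> 'c list" where
  "qpath (Leaf r) x = []"
| "qpath (Query c f) x = c # qpath (f (x c)) x"

text \<open>Inputs in the support of mu, cells indexed 0-based: [n] = {0..<n}, [m] = {0..<m}.\<close>
definition mu_input :: "nat \<Rightarrow> nat \<Rightarrow> (nat \<Rightarrow> nat) \<Rightarrow> cell \<Rightarrow> 'p sym" where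
  "mu_input n m l = (\<lambda>(i, j). if i < n \<and> j < m \<and> i = l j
      then (0, None, None, None) else (1, None, None, None))"

definition zeros_found :: "('c, 'p sym, 'o) dtree \<Rightarrow> ('c \<Rightarrow> 'p sym) \<Rightarrow> nat" where
  "zeros_found T x = card {c \<in> set (qpath T x). fst (x c) = 0}"

definition exp_queries :: "('c, 's, 'o) dtree pmf \<Rightarrow> ('c \<Rightarrow> 's) \<Rightarrow> ennreal" where
  "exp_queries A x = (\<integral>\<^sup>+ T. ennreal (real (length (qpath T x))) \<partial>measure_pmf A)"

end

theory Submission imports Defs begin

lemma qpath_agree:
  "(\<forall>c\<in>set (qpath T y). x c = y c) \<Longrightarrow> qpath T x = qpath T y"
proof (induction T)
  case (Leaf r) then show ?case by simp
next
  case (Query c f)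
  then show ?case by simp
qed

lemma qpath_diff:
  assumes "\<forall>d. d \<noteq> c \<longrightarrow> x d = y d" "c \<in> set (qpath T y)"
  shows "set (takeWhile (\<lambda>e. e \<noteq> c) (qpath T y)) \<union> {c} \<subseteq> set (qpath T x)"
  using assms(2)
proof (induction T)
  case (Leaf r) then show ?case by simp
next
  case (Query d f)
  show ?case
  proof (cases "d = c")
    case True then show ?thesis by simp
  next
    case False
    then have "x d = y d" using assms(1) by blast
    with False Query show ?thesis by auto
  qed
qed

lemma tw_cases:
  "c \<in> set P \<Longrightarrow> d \<in> set P \<Longrightarrow> c \<noteq> d \<Longrightarrow>
   c \<in> set (takeWhile (\<lambda>e. e \<noteq> d) P) \<or> d \<in> set (takeWhile (\<lambda>e. e \<noteq> c) P)"
proof (induction P)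
  case Nil then show ?case by simp
next
  case (Cons a P)
  show ?case
  proof (cases "a = c")
    case True then show ?thesis using Cons.prems(3) by simp
  next
    case False
    show ?thesis
    proof (cases "a = d")
      case True then show ?thesis using Cons.prems(3) by simp
    next
      case False2: False
      then have "c \<in> set P" "d \<in> set P" using Cons.prems \<open>a \<noteq> c\<close> by auto
      then have "c \<in> set (takeWhile (\<lambda>e. e \<noteq> d) P) \<or> d \<in> set (takeWhile (\<lambda>e. e \<noteq> c) P)"
        using Cons.IH Cons.prems(3) by blast
      then show ?thesis using \<open>a \<noteq> c\<close> False2 by simp
    qed
  qed
qed

lemma tw_mono:
  "c \<in> set (takeWhile (\<lambda>e. e \<noteq> d) P) \<Longrightarrow>
   set (takeWhile (\<lambda>e. e \<noteq> c) P) \<subseteq> set (takeWhile (\<lambda>e. e \<noteq> d) P)"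
proof (induction P)
  case Nil then show ?case by simp
next
  case (Cons a P)
  show ?case
  proof (cases "a = d")
    case True then show ?thesis using Cons.prems by simp
  next
    case False
    show ?thesis
    proof (cases "a = c")
      case True then show ?thesis by simp
    next
      case False2: False
      have "c \<in> set (takeWhile (\<lambda>e. e \<noteq> d) P)" using Cons.prems False False2 by simp
      then have "set (takeWhile (\<lambda>e. e \<noteq> c) P) \<subseteq> set (takeWhile (\<lambda>e. e \<noteq> d) P)"
        by (rule Cons.IH)
      then show ?thesis using False False2 by auto
    qed
  qed
qed


lemma rank_count:
  fixes P :: "(nat \<times> nat) list"
  shows "card {a. (a,j) \<in> set P \<and>
     card {e \<in> set (takeWhile (\<lambda>e. e \<noteq> (a,j)) P) \<union> {(a,j)}. snd e = j} \<le> k} \<le> k"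
proof -
  define F where "F = {a. (a,j) \<in> set P \<and>
     card {e \<in> set (takeWhile (\<lambda>e. e \<noteq> (a,j)) P) \<union> {(a,j)}. snd e = j} \<le> k}"
  define r where "r a = card {e \<in> set (takeWhile (\<lambda>e. e \<noteq> (a,j)) P). snd e = j}" for a
  have cardeq: "card {e \<in> set (takeWhile (\<lambda>e. e \<noteq> (a,j)) P) \<union> {(a,j)}. snd e = j} = Suc (r a)" for a
  proof -
    have "{e \<in> set (takeWhile (\<lambda>e. e \<noteq> (a,j)) P) \<union> {(a,j)}. snd e = j}
       = insert (a,j) {e \<in> set (takeWhile (\<lambda>e. e \<noteq> (a,j)) P). snd e = j}" by auto
    moreover have "(a,j) \<notin> {e \<in> set (takeWhile (\<lambda>e. e \<noteq> (a,j)) P). snd e = j}"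
      by (auto dest: set_takeWhileD)
    ultimately show ?thesis unfolding r_def by simp
  qed
  have lt: "r a < r b" if that: "(a,j) \<in> set (takeWhile (\<lambda>e. e \<noteq> (b,j)) P)" for a b
  proof -
    let ?A = "{e \<in> set (takeWhile (\<lambda>e. e \<noteq> (a,j)) P). snd e = j}"
    let ?B = "{e \<in> set (takeWhile (\<lambda>e. e \<noteq> (b,j)) P). snd e = j}"
    have sub: "?A \<subseteq> ?B" using tw_mono[OF that] by blast
    have inB: "(a,j) \<in> ?B" using that by simp
    have notA: "(a,j) \<notin> ?A" by (auto dest: set_takeWhileD)
    have ps: "?A \<subset> ?B" using sub inB notA by blast
    have fin: "finite ?B" by simp
    show ?thesis unfolding r_def by (rule psubset_card_mono[OF fin ps])
  qed
  have inj: "inj_on r F"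
  proof (rule inj_onI)
    fix a b assume "a \<in> F" "b \<in> F" "r a = r b"
    show "a = b"
    proof (rule ccontr)
      assume "a \<noteq> b"
      then have "(a,j) \<noteq> (b,j)" by simp
      have "(a,j) \<in> set P" "(b,j) \<in> set P" using \<open>a \<in> F\<close> \<open>b \<in> F\<close> unfolding F_def by blast+
      from tw_cases[OF this \<open>(a,j) \<noteq> (b,j)\<close>]
      have "(a,j) \<in> set (takeWhile (\<lambda>e. e \<noteq> (b,j)) P) \<or> (b,j) \<in> set (takeWhile (\<lambda>e. e \<noteq> (a,j)) P)" .
      with lt[of a b] lt[of b a] \<open>r a = r b\<close> show False by linarith
    qed
  qed
  have "r ` F \<subseteq> {..<k}"
  proof clarify
    fix a assume "a \<in> F"
    then have "card {e \<in> set (takeWhile (\<lambda>e. e \<noteq> (a,j)) P) \<union> {(a,j)}. snd e = j} \<le> k"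
      unfolding F_def by blast
    then show "r a < k" unfolding cardeq by simp
  qed
  from card_inj_on_le[OF inj this] have "card F \<le> k" by simp
  then show ?thesis unfolding F_def .
qed

lemma mu_input_upd:
  assumes "d \<noteq> (a,j)"
  shows " (mu_input n m (g(j:=a)) d :: 'p sym) = mu_input n m (g(j:=n)) d"
proof -
  obtain i j' where d: "d = (i, j')" by (cases d)
  show ?thesis
  proof (cases "j' = j")
    case True
    with d assms have "i \<noteq> a" by simp
    with d True show ?thesis unfolding mu_input_def by simp
  next
    case False
    with d show ?thesis unfolding mu_input_def by simp
  qed
qed

lemma column_count:
  fixes T :: "(cell, 'p sym, 'o) dtree"
  shows "card {a \<in> {..<n}. (a, j) \<in> set (qpath T (mu_input n m (g(j:=a)) :: cell \<Rightarrow> 'p sym)) \<and>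
      card {e \<in> set (qpath T (mu_input n m (g(j:=a)) :: cell \<Rightarrow> 'p sym)). snd e = j} \<le> k} \<le> k"
proof -
  define P where "P = qpath T (mu_input n m (g(j:=n)) :: cell \<Rightarrow> 'p sym)"
  define F where "F = {a. (a,j) \<in> set P \<and>
     card {e \<in> set (takeWhile (\<lambda>e. e \<noteq> (a,j)) P) \<union> {(a,j)}. snd e = j} \<le> k}"
  have "card F \<le> k" unfolding F_def by (rule rank_count)
  have finF: "finite F"
    by (rule finite_subset[of _ "fst ` set P"]) (force simp: F_def)+
  have sub: "{a \<in> {..<n}. (a, j) \<in> set (qpath T (mu_input n m (g(j:=a)) :: cell \<Rightarrow> 'p sym)) \<and>
      card {e \<in> set (qpath T (mu_input n m (g(j:=a)) :: cell \<Rightarrow> 'p sym)). snd e = j} \<le> k} \<subseteq> F"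
  proof
    fix a assume a: "a \<in> {a \<in> {..<n}. (a, j) \<in> set (qpath T (mu_input n m (g(j:=a)) :: cell \<Rightarrow> 'p sym)) \<and>
      card {e \<in> set (qpath T (mu_input n m (g(j:=a)) :: cell \<Rightarrow> 'p sym)). snd e = j} \<le> k}"
    define x where "x = (mu_input n m (g(j:=a)) :: cell \<Rightarrow> 'p sym)"
    have diff: "\<forall>d. d \<noteq> (a,j) \<longrightarrow> x d = mu_input n m (g(j:=n)) d"
      unfolding x_def using mu_input_upd by blast
    have inP: "(a,j) \<in> set P"
    proof (rule ccontr)
      assume "(a,j) \<notin> set P"
      then have "\<forall>c\<in>set P. x c = mu_input n m (g(j:=n)) c"
      proof (intro ballI)
        fix c assume "c \<in> set P" "(a,j) \<notin> set P"
        then have "c \<noteq> (a,j)" by auto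
        then show "x c = mu_input n m (g(j:=n)) c" using diff by blast
      qed
      then have "qpath T x = P" unfolding P_def by (rule qpath_agree)
      moreover have "(a,j) \<in> set (qpath T x)" using a unfolding x_def by blast
      ultimately show False using \<open>(a,j) \<notin> set P\<close> by simp
    qed
    have s: "set (takeWhile (\<lambda>e. e \<noteq> (a,j)) P) \<union> {(a,j)} \<subseteq> set (qpath T x)"
      using qpath_diff[OF diff, of T] inP unfolding P_def by blast
    have "card {e \<in> set (takeWhile (\<lambda>e. e \<noteq> (a,j)) P) \<union> {(a,j)}. snd e = j}
       \<le> card {e \<in> set (qpath T x). snd e = j}"
      by (rule card_mono) (use s in auto)
    moreover have "card {e \<in> set (qpath T x). snd e = j} \<le> k" using a unfolding x_def by blast
    ultimately show "a \<in> F" unfolding F_def using inP by simp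
  qed
  show ?thesis using card_mono[OF finF sub] \<open>card F \<le> k\<close> by (rule le_trans)
qed


lemma sum_card_snd:
  assumes "finite X" "finite B"
  shows "(\<Sum>j\<in>B. card {e \<in> X. snd e = j}) = card {e \<in> X. snd e \<in> B}"
  using assms(2)
proof (induction B rule: finite_induct)
  case empty then show ?case by simp
next
  case (insert j B)
  have u: "{e \<in> X. snd e \<in> insert j B} = {e \<in> X. snd e = j} \<union> {e \<in> X. snd e \<in> B}" by blast
  have f1: "finite {e \<in> X. snd e = j}" using assms(1) by simp
  have f2: "finite {e \<in> X. snd e \<in> B}" using assms(1) by simp
  have dj: "{e \<in> X. snd e = j} \<inter> {e \<in> X. snd e \<in> B} = {}" using insert(2) by blast
  have "(\<Sum>j\<in>insert j B. card {e \<in> X. snd e = j}) = card {e \<in> X. snd e = j} + (\<Sum>j\<in>B. card {e \<in> X. snd e = j})"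
    by (rule sum.insert[OF insert(1,2)])
  also have "\<dots> = card {e \<in> X. snd e = j} + card {e \<in> X. snd e \<in> B}" using insert.IH by simp
  also have "\<dots> = card ({e \<in> X. snd e = j} \<union> {e \<in> X. snd e \<in> B})"
    by (rule card_Un_disjoint[OF f1 f2 dj, symmetric])
  also have "\<dots> = card {e \<in> X. snd e \<in> insert j B}" by (simp only: u)
  finally show ?case .
qed

lemma card_filter_sum: "finite A \<Longrightarrow> card {j \<in> A. Q j} = (\<Sum>j\<in>A. if Q j then 1 else 0 :: nat)"
proof -
  assume fin: "finite A"
  have "card {j \<in> A. Q j} = (\<Sum>j\<in>{j \<in> A. Q j}. 1::nat)" by simp
  also have "\<dots> = (\<Sum>j\<in>A. if Q j then 1 else 0)" by (rule sum.inter_filter[OF fin])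
  finally show ?thesis .
qed

lemma sum_swap_card:
  assumes "finite L" "finite J"
  shows "(\<Sum>l\<in>L. card {j \<in> J. Q j l}) = (\<Sum>j\<in>J. card {l \<in> L. Q j l})"
  using assms by (simp add: card_filter_sum sum.swap[of _ L J])

lemma PiE_column:
  fixes Q :: "(nat \<Rightarrow> nat) \<Rightarrow> bool"
  assumes j: "j < m" and bound: "\<And>g. card {a \<in> {..<n}. Q (g(j:=a))} \<le> k"
  shows "card {l \<in> PiE {..<m} (\<lambda>_. {..<n}). Q l} \<le> k * card (PiE ({..<m} - {j}) (\<lambda>_. {..<n}))"
proof -
  define G where "G = PiE ({..<m} - {j}) (\<lambda>_. {..<n::nat})"
  define h :: "nat \<times> (nat \<Rightarrow> nat) \<Rightarrow> (nat \<Rightarrow> nat)" where "h = (\<lambda>(y, g). g(j := y))"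
  define Sg where "Sg = (SIGMA g:G. {a \<in> {..<n}. Q (g(j:=a))})"
  have ins: "insert j ({..<m} - {j}) = {..<m}" using j by auto
  have Leq: "PiE {..<m} (\<lambda>_. {..<n}) = h ` ({..<n} \<times> G)"
    unfolding h_def G_def using PiE_insert_eq[of j "{..<m} - {j}" "\<lambda>_. {..<n::nat}"] ins by simp
  have injh: "inj_on h ({..<n} \<times> G)"
    unfolding h_def G_def by (rule inj_combinator) simp
  define W where "W = {p \<in> {..<n} \<times> G. Q (h p)}"
  have eq1: "{l \<in> PiE {..<m} (\<lambda>_. {..<n}). Q l} = h ` W"
    unfolding Leq W_def by blast
  have "card (h ` W) = card W"
    by (rule card_image) (rule inj_on_subset[OF injh], auto simp: W_def)
  have Weq: "W = (\<lambda>(g,y). (y,g)) ` Sg"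
    unfolding W_def Sg_def h_def by auto
  have "card W = card Sg"
    unfolding Weq by (rule card_image) (auto simp: inj_on_def)
  have finG: "finite G" unfolding G_def by (simp add: finite_PiE)
  have "card Sg = (\<Sum>g\<in>G. card {a \<in> {..<n}. Q (g(j:=a))})"
    unfolding Sg_def using finG by (rule card_SigmaI) simp
  also have "\<dots> \<le> (\<Sum>g\<in>G. k)" by (rule sum_mono) (rule bound)
  also have "\<dots> = k * card G" by simp
  finally show ?thesis
    using eq1 \<open>card (h ` W) = card W\<close> \<open>card W = card Sg\<close> unfolding G_def by simp
qed

lemma zeros_eq:
  fixes T :: "(cell, 'p sym, 'o) dtree"
  assumes l: "l \<in> PiE {..<m} (\<lambda>_. {..<n})"
  shows "zeros_found T (mu_input n m l :: cell \<Rightarrow> 'p sym)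
     = card {j \<in> {..<m}. (l j, j) \<in> set (qpath T (mu_input n m l :: cell \<Rightarrow> 'p sym))}"
proof -
  define P where "P = set (qpath T (mu_input n m l :: cell \<Rightarrow> 'p sym))"
  have "{c \<in> P. fst ((mu_input n m l :: cell \<Rightarrow> 'p sym) c) = 0}
      = (\<lambda>j. (l j, j)) ` {j \<in> {..<m}. (l j, j) \<in> P}"
  proof
    show "{c \<in> P. fst ((mu_input n m l :: cell \<Rightarrow> 'p sym) c) = 0}
      \<subseteq> (\<lambda>j. (l j, j)) ` {j \<in> {..<m}. (l j, j) \<in> P}"
    proof (clarify)
      fix i j assume "(i,j) \<in> P" "fst ((mu_input n m l :: cell \<Rightarrow> 'p sym) (i,j)) = 0"
      then have "i < n" "j < m" "i = l j" "(i,j) \<in> P"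
        by (auto simp: mu_input_def split: if_splits)
      then show "(i,j) \<in> (\<lambda>j. (l j, j)) ` {j \<in> {..<m}. (l j, j) \<in> P}" by auto
    qed
    show "(\<lambda>j. (l j, j)) ` {j \<in> {..<m}. (l j, j) \<in> P}
      \<subseteq> {c \<in> P. fst ((mu_input n m l :: cell \<Rightarrow> 'p sym) c) = 0}"
      using l by (auto simp: mu_input_def PiE_def)
  qed
  moreover have "inj_on (\<lambda>j. (l j, j)) {j \<in> {..<m}. (l j, j) \<in> P}" by (rule inj_onI) auto
  ultimately show ?thesis unfolding zeros_found_def P_def by (simp add: card_image)
qed

lemma per_input:
  fixes T :: "(cell, 'p sym, 'o) dtree"
  assumes l: "l \<in> PiE {..<m} (\<lambda>_. {..<n})"
  shows "real (zeros_found T (mu_input n m l :: cell \<Rightarrow> 'p sym)) \<le>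
     real (card {j \<in> {..<m}. (l j, j) \<in> set (qpath T (mu_input n m l :: cell \<Rightarrow> 'p sym)) \<and>
        card {e \<in> set (qpath T (mu_input n m l :: cell \<Rightarrow> 'p sym)). snd e = j} \<le> k})
     + real (length (qpath T (mu_input n m l :: cell \<Rightarrow> 'p sym))) / (real k + 1)"
proof -
  define P where "P = qpath T (mu_input n m l :: cell \<Rightarrow> 'p sym)"
  define Fd where "Fd = {j \<in> {..<m}. (l j, j) \<in> set P}"
  define Ch where "Ch = {j \<in> {..<m}. (l j, j) \<in> set P \<and> card {e \<in> set P. snd e = j} \<le> k}"
  define Ex where "Ex = {j \<in> {..<m}. (l j, j) \<in> set P \<and> \<not> card {e \<in> set P. snd e = j} \<le> k}"
  have "Fd = Ch \<union> Ex" unfolding Fd_def Ch_def Ex_def by auto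
  then have c1: "card Fd \<le> card Ch + card Ex" by (simp add: card_Un_le)
  have "(\<Sum>j\<in>Ex. Suc k) \<le> (\<Sum>j\<in>Ex. card {e \<in> set P. snd e = j})"
    by (rule sum_mono) (auto simp: Ex_def)
  also have "\<dots> = card {e \<in> set P. snd e \<in> Ex}"
    by (rule sum_card_snd) (auto simp: Ex_def)
  also have "\<dots> \<le> card (set P)" by (rule card_mono) auto
  also have "\<dots> \<le> length P" by (rule card_length)
  finally have "Suc k * card Ex \<le> length P" by (simp add: mult.commute)
  then have "(real k + 1) * real (card Ex) \<le> real (length P)"
    by (metis of_nat_Suc of_nat_le_iff of_nat_mult add.commute)
  then have "real (card Ex) \<le> real (length P) / (real k + 1)"
    by (simp add: field_simps)
  moreover have "zeros_found T (mu_input n m l :: cell \<Rightarrow> 'p sym) = card Fd"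
    unfolding Fd_def P_def by (rule zeros_eq[OF l])
  ultimately show ?thesis using c1 unfolding Ch_def P_def
    by (smt (verit) of_nat_add of_nat_mono)
qed


lemma det_bound:
  fixes T :: "(cell, 'p sym, 'o) dtree" and c1 c2 :: real
  assumes c1: "c1 > 0" and c2: "c2 > 0" and n: "n \<ge> 1" and m: "m \<ge> 1"
  and hyp: "\<forall>l \<in> PiE {..<m} (\<lambda>_. {..<n}).
      real (zeros_found T (mu_input n m l :: cell \<Rightarrow> 'p sym)) \<ge> c1 * real m \<or>
      real (card (set (qpath T (mu_input n m l :: cell \<Rightarrow> 'p sym)))) \<ge> c2 * real n * real m"
  shows "min (c2/2) (c1^2/16) * real n * real m * real (card (PiE {..<m} (\<lambda>_. {..<n::nat})))
     \<le> (\<Sum>l\<in>PiE {..<m} (\<lambda>_. {..<n}). real (length (qpath T (mu_input n m l :: cell \<Rightarrow> 'p sym))))"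
proof -
  define L where "L = PiE {..<m} (\<lambda>_. {..<n::nat})"
  define len where "len l = real (length (qpath T (mu_input n m l :: cell \<Rightarrow> 'p sym)))" for l
  define zer where "zer l = real (zeros_found T (mu_input n m l :: cell \<Rightarrow> 'p sym))" for l
  define k where "k = nat \<lfloor>c1 * real n / 4\<rfloor>"
  define cheap where "cheap j l \<longleftrightarrow> (l j, j) \<in> set (qpath T (mu_input n m l :: cell \<Rightarrow> 'p sym)) \<and>
        card {e \<in> set (qpath T (mu_input n m l :: cell \<Rightarrow> 'p sym)). snd e = j} \<le> k" for j and l :: "nat \<Rightarrow> nat"
  define N where "N = real (card L)"
  define N' where "N' = real (card (PiE ({..<m} - {0}) (\<lambda>_. {..<n::nat})))"
  define S where "S = (\<Sum>l\<in>L. len l)"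
  have finL: "finite L" unfolding L_def by (simp add: finite_PiE)
  have kle: "real k \<le> c1 * real n / 4" unfolding k_def using c1
    by (simp add: of_nat_nat) linarith
  have kgt: "c1 * real n / 4 \<le> real k + 1" unfolding k_def using c1
    by (simp add: of_nat_nat)
  have NN': "N = real n * N'"
  proof -
    have "card L = n ^ m" unfolding L_def by (simp add: card_PiE)
    moreover have "card (PiE ({..<m} - {0}) (\<lambda>_. {..<n::nat})) = n ^ (m - 1)"
      using m by (simp add: card_PiE)
    moreover have "n ^ m = n * n ^ (m - 1)" using m by (cases m) auto
    ultimately have "card L = n * card (PiE ({..<m} - {0}) (\<lambda>_. {..<n::nat}))" by simp
    then show ?thesis unfolding N_def N'_def by simp
  qed
  have col: "card {l \<in> L. cheap j l} \<le> k * card (PiE ({..<m} - {0}) (\<lambda>_. {..<n::nat}))" if j: "j < m" for j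
  proof -
    have "card {l \<in> L. cheap j l} \<le> k * card (PiE ({..<m} - {j}) (\<lambda>_. {..<n::nat}))"
      unfolding L_def
    proof (rule PiE_column[OF j])
      fix g :: "nat \<Rightarrow> nat"
      show "card {a \<in> {..<n}. cheap j (g(j:=a))} \<le> k"
        unfolding cheap_def using column_count[where T=T and g=g and j=j and k=k and n=n and m=m] by simp
    qed
    moreover have "card (PiE ({..<m} - {j}) (\<lambda>_. {..<n::nat})) = card (PiE ({..<m} - {0}) (\<lambda>_. {..<n::nat}))"
      using j m by (simp add: card_PiE)
    ultimately show ?thesis by simp
  qed
  have "(\<Sum>l\<in>L. card {j \<in> {..<m}. cheap j l}) = (\<Sum>j\<in>{..<m}. card {l \<in> L. cheap j l})"
    by (rule sum_swap_card[OF finL]) simp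
  also have "\<dots> \<le> (\<Sum>j\<in>{..<m}. k * card (PiE ({..<m} - {0}) (\<lambda>_. {..<n::nat})))"
    by (rule sum_mono) (simp add: col)
  also have "\<dots> = m * (k * card (PiE ({..<m} - {0}) (\<lambda>_. {..<n::nat})))" by simp
  finally have chnat: "(\<Sum>l\<in>L. card {j \<in> {..<m}. cheap j l}) \<le> m * (k * card (PiE ({..<m} - {0}) (\<lambda>_. {..<n::nat})))" .
  have chsum: "(\<Sum>l\<in>L. real (card {j \<in> {..<m}. cheap j l})) \<le> real m * real k * N'"
  proof -
    have "(\<Sum>l\<in>L. real (card {j \<in> {..<m}. cheap j l})) = real (\<Sum>l\<in>L. card {j \<in> {..<m}. cheap j l})"
      by (rule of_nat_sum[symmetric])
    also have "\<dots> \<le> real (m * (k * card (PiE ({..<m} - {0}) (\<lambda>_. {..<n::nat}))))"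
      using chnat by (rule of_nat_mono)
    also have "\<dots> = real m * real k * N'" unfolding N'_def by simp
    finally show ?thesis .
  qed
  have "(\<Sum>l\<in>L. zer l) \<le> (\<Sum>l\<in>L. real (card {j \<in> {..<m}. cheap j l}) + len l / (real k + 1))"
    by (rule sum_mono) (unfold zer_def len_def cheap_def L_def, rule per_input, simp)
  also have "\<dots> = (\<Sum>l\<in>L. real (card {j \<in> {..<m}. cheap j l})) + S / (real k + 1)"
    unfolding S_def by (simp add: sum.distrib sum_divide_distrib)
  finally have Zup: "(\<Sum>l\<in>L. zer l) \<le> real m * real k * N' + S / (real k + 1)"
    using chsum by linarith
  define G where "G = {l \<in> L. zer l \<ge> c1 * real m}"
  have GL: "G \<subseteq> L" unfolding G_def by auto
  have cardsplit: "real (card G) + real (card (L - G)) = N"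
    unfolding N_def using card_Diff_subset[OF finite_subset[OF GL finL] GL] card_mono[OF finL GL]
    by (simp add: of_nat_diff)
  have Sge: "real (card (L - G)) * (c2 * real n * real m) \<le> S"
  proof -
    have "real (card (L - G)) * (c2 * real n * real m) = (\<Sum>l\<in>L - G. c2 * real n * real m)" by simp
    also have "\<dots> \<le> (\<Sum>l\<in>L - G. len l)"
    proof (rule sum_mono)
      fix l assume l: "l \<in> L - G"
      then have "real (card (set (qpath T (mu_input n m l :: cell \<Rightarrow> 'p sym)))) \<ge> c2 * real n * real m"
        using hyp unfolding G_def L_def zer_def by auto
      moreover have "card (set (qpath T (mu_input n m l :: cell \<Rightarrow> 'p sym))) \<le> length (qpath T (mu_input n m l :: cell \<Rightarrow> 'p sym))"
        by (rule card_length)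
      ultimately show "c2 * real n * real m \<le> len l" unfolding len_def
        by (meson of_nat_le_iff order_trans)
    qed
    also have "\<dots> \<le> S" unfolding S_def
      by (rule sum_mono2[OF finL]) (auto simp: len_def)
    finally show ?thesis .
  qed
  have Zge: "real (card G) * (c1 * real m) \<le> (\<Sum>l\<in>L. zer l)"
  proof -
    have "real (card G) * (c1 * real m) = (\<Sum>l\<in>G. c1 * real m)" by simp
    also have "\<dots> \<le> (\<Sum>l\<in>G. zer l)" by (rule sum_mono) (unfold G_def, blast)
    also have "\<dots> \<le> (\<Sum>l\<in>L. zer l)"
      by (rule sum_mono2[OF finL GL]) (simp add: zer_def)
    finally show ?thesis .
  qed
  have Npos: "N \<ge> 0" unfolding N_def by simp
  have goal: "min (c2/2) (c1^2/16) * real n * real m * N \<le> S"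
  proof (cases "real (card (L - G)) \<ge> N / 2")
    case True
    have "min (c2/2) (c1^2/16) * real n * real m * N \<le> (c2/2) * real n * real m * N"
      using Npos by (intro mult_right_mono) auto
    also have "\<dots> = (N/2) * (c2 * real n * real m)" by simp
    also have "\<dots> \<le> real (card (L - G)) * (c2 * real n * real m)"
      using True c2 by (intro mult_right_mono) auto
    finally show ?thesis using Sge by linarith
  next
    case False
    then have G2: "real (card G) \<ge> N / 2" using cardsplit by linarith
    have "(N/2) * (c1 * real m) \<le> real (card G) * (c1 * real m)"
      using G2 c1 by (intro mult_right_mono) auto
    then have A: "(N/2) * (c1 * real m) \<le> real m * real k * N' + S / (real k + 1)"
      using Zge Zup by linarith
    have "real m * real k * N' \<le> real m * (c1 * real n / 4) * N'"
      using kle by (intro mult_right_mono mult_left_mono) (auto simp: N'_def)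
    also have "\<dots> = (N/4) * (c1 * real m)" using NN' by simp
    finally have "(N/4) * (c1 * real m) \<le> S / (real k + 1)" using A by linarith
    then have B: "(N/4) * (c1 * real m) * (real k + 1) \<le> S"
      by (simp add: field_simps)
    have "min (c2/2) (c1^2/16) * real n * real m * N \<le> (c1^2/16) * real n * real m * N"
      using Npos by (intro mult_right_mono) auto
    also have "\<dots> = (N/4) * (c1 * real m) * (c1 * real n / 4)" by (simp add: power2_eq_square)
    also have "\<dots> \<le> (N/4) * (c1 * real m) * (real k + 1)"
      using kgt c1 Npos by (intro mult_left_mono) auto
    finally show ?thesis using B by linarith
  qed
  then show ?thesis unfolding N_def S_def len_def L_def .
qed


theorem lemma10:
  fixes c1 c2 :: real
  assumes "c1 > 0" and "c2 > 0"
  shows "\<exists>c > 0. \<forall>(n::nat) (m::nat) (A :: (cell, 'p sym, 'o) dtree pmf).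
           n \<ge> 1 \<longrightarrow> m \<ge> 1 \<longrightarrow>
           (\<forall>T \<in> set_pmf A. \<forall>l \<in> {..<m} \<rightarrow>\<^sub>E {..<n}.
              set (qpath T (mu_input n m l)) \<subseteq> {..<n} \<times> {..<m} \<and>
              (real (zeros_found T (mu_input n m l)) \<ge> c1 * real m \<or>
               real (card (set (qpath T (mu_input n m l)))) \<ge> c2 * real n * real m)) \<longrightarrow>
           (\<exists>l \<in> {..<m} \<rightarrow>\<^sub>E {..<n}.
              exp_queries A (mu_input n m l) \<ge> ennreal (c * real n * real m))"
proof (intro exI[of _ "min (c2/2) (c1^2/16)"] conjI allI impI)
  show "min (c2/2) (c1^2/16) > 0" using assms by simp
  define c where "c = min (c2/2) (c1^2/16)"
  have cpos: "c > 0" using assms by (simp add: c_def)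
  fix n m :: nat and A :: "(cell, 'p sym, 'o) dtree pmf"
  assume n: "n \<ge> 1" and m: "m \<ge> 1"
  assume H: "\<forall>T \<in> set_pmf A. \<forall>l \<in> {..<m} \<rightarrow>\<^sub>E {..<n}.
              set (qpath T (mu_input n m l)) \<subseteq> {..<n} \<times> {..<m} \<and>
              (real (zeros_found T (mu_input n m l)) \<ge> c1 * real m \<or>
               real (card (set (qpath T (mu_input n m l)))) \<ge> c2 * real n * real m)"
  define L where "L = PiE {..<m} (\<lambda>_. {..<n::nat})"
  define E where "E l = exp_queries A (mu_input n m l :: cell \<Rightarrow> 'p sym)" for l
  have finL: "finite L" unfolding L_def by (simp add: finite_PiE)
  have "(0::nat) \<in> {..<n}" using n by simp
  then have "{..<n} \<noteq> {}" by blast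
  then have Lne: "L \<noteq> {}" unfolding L_def by (simp add: PiE_eq_empty_iff)
  define N where "N = card L"
  have Npos: "N > 0" unfolding N_def using finL Lne by (simp add: card_gt_0_iff)
  have det: "c * real n * real m * real N \<le>
      (\<Sum>l\<in>L. real (length (qpath T (mu_input n m l :: cell \<Rightarrow> 'p sym))))" if "T \<in> set_pmf A" for T
    unfolding c_def N_def L_def
  proof (rule det_bound[OF assms n m])
    show "\<forall>l \<in> PiE {..<m} (\<lambda>_. {..<n}).
      real (zeros_found T (mu_input n m l :: cell \<Rightarrow> 'p sym)) \<ge> c1 * real m \<or>
      real (card (set (qpath T (mu_input n m l :: cell \<Rightarrow> 'p sym)))) \<ge> c2 * real n * real m"
    proof
      fix l assume "l \<in> PiE {..<m} (\<lambda>_. {..<n})"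
      with H that show "real (zeros_found T (mu_input n m l :: cell \<Rightarrow> 'p sym)) \<ge> c1 * real m \<or>
      real (card (set (qpath T (mu_input n m l :: cell \<Rightarrow> 'p sym)))) \<ge> c2 * real n * real m"
        by blast
    qed
  qed
  have "ennreal (c * real n * real m * real N) = (\<integral>\<^sup>+ T. ennreal (c * real n * real m * real N) \<partial>measure_pmf A)"
    by (simp add: measure_pmf.emeasure_space_1)
  also have "\<dots> \<le> (\<integral>\<^sup>+ T. ennreal (\<Sum>l\<in>L. real (length (qpath T (mu_input n m l :: cell \<Rightarrow> 'p sym)))) \<partial>measure_pmf A)"
    by (rule nn_integral_mono_AE) (auto simp: AE_measure_pmf_iff intro!: ennreal_leI det)
  also have "\<dots> = (\<integral>\<^sup>+ T. (\<Sum>l\<in>L. ennreal (real (length (qpath T (mu_input n m l :: cell \<Rightarrow> 'p sym))))) \<partial>measure_pmf A)"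
    by (simp add: sum_ennreal)
  also have "\<dots> = (\<Sum>l\<in>L. E l)"
    unfolding E_def exp_queries_def by (rule nn_integral_sum) auto
  finally have sumge: "ennreal (c * real n * real m * real N) \<le> (\<Sum>l\<in>L. E l)" .
  obtain l0 where l0: "l0 \<in> L" "\<forall>l\<in>L. E l \<le> E l0"
  proof -
    have fin: "finite (E ` L)" using finL by simp
    have ne: "E ` L \<noteq> {}" using Lne by simp
    obtain l0 where "l0 \<in> L" "E l0 = Max (E ` L)" using Max_in[OF fin ne] by (metis imageE)
    moreover have "\<forall>l\<in>L. E l \<le> Max (E ` L)" using Max_ge[OF fin] by blast
    ultimately show ?thesis using that by metis
  qed
  have "(\<Sum>l\<in>L. E l) \<le> of_nat N * E l0"
    unfolding N_def by (rule sum_bounded_above) (use l0 in auto)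
  with sumge have "of_nat N * ennreal (c * real n * real m) \<le> of_nat N * E l0"
    using cpos by (simp add: ennreal_mult' mult.commute ennreal_of_nat_eq_real_of_nat)
  then have "ennreal (c * real n * real m) \<le> E l0"
    using Npos by (subst (asm) ennreal_mult_le_mult_iff) auto
  then show "\<exists>l \<in> {..<m} \<rightarrow>\<^sub>E {..<n}. exp_queries A (mu_input n m l) \<ge> ennreal (min (c2/2) (c1^2/16) * real n * real m)"
    using l0 unfolding E_def L_def c_def by auto
qed

end
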